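(* For every $n\ge1$ and $a>0$, the quantities $r_n=r_n(a)$ satisfy the second-order difference equation $$a^2r_n^2=\frac{n+r_n}{2}\,(r_{n+1}+r_n)(r_n+r_{n-1}).$$ Equivalently, $y_n:=-2r_n/a^2$ satisfies $$(y_{n+1}+y_n)(y_n+y_{n-1})=\frac{-4y_n^2}{y_n-2n/a^2},$$ which is a case of the modified discrete Painlevé II equation $(x_{n-1}+x_n)(x_n+x_{n+1})=\frac{-4x_n^2+m^2}{\lambda x_n+z_n}$ with $m=0$, $\lambda=1$, $z_n=-2n/a^2$.
   Context: Fix $a>0$. Let $w(x)=e^{-x^2}\chi_{\mathbb{R}\setminus(-a,a)}(x)$. Let $P_n$ be the monic orthogonal polynomials for $w$ on $\mathbb{R}$, with $h_n=\int P_n^2w\,dx$. Define $$r_n(a)=\frac{2e^{-a^2}P_n(a)P_{n-1}(a)}{h_{n-1}(a)}\ (n\ge1),\qquad r_0(a)=0.$$ *)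

theory Defs
  imports "HOL-Analysis.Analysis" "HOL-Computational_Algebra.Polynomial"
begin

definition wgt :: "real \<Rightarrow> real \<Rightarrow> real" where
  "wgt a x = (if x \<in> - {-a<..<a} then exp (- (x^2)) else 0)"

definition wip :: "real \<Rightarrow> real poly \<Rightarrow> real poly \<Rightarrow> real" where
  "wip a p q = (LINT x|lborel. poly p x * poly q x * wgt a x)"

definition OP :: "real \<Rightarrow> nat \<Rightarrow> real poly" where
  "OP a n = (THE p. degree p = n \<and> lead_coeff p = 1 \<and>
                    (\<forall>q. degree q < n \<longrightarrow> wip a p q = 0))"

definition hn :: "real \<Rightarrow> nat \<Rightarrow> real" where
  "hn a n = wip a (OP a n) (OP a n)"

definition rn :: "real \<Rightarrow> nat \<Rightarrow> real" where
  "rn a n = (if n = 0 then 0 else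
     2 * exp (- (a^2)) * poly (OP a n) a * poly (OP a (n - 1)) a / hn a (n - 1))"

end

theory Submission
  imports Defs "HOL-Probability.Distributions"
begin


lemma int_even: "integrable lborel (\<lambda>x::real. exp (-x\<^sup>2)*x^(2*k))"
  using has_bochner_integral_even_function[OF gaussian_moment_even_pos[where k=k]]
  by (auto simp: integrable.intros)

lemma mono_bound: "norm ((x::real)^k * exp (-x\<^sup>2)) \<le> norm (exp (-x\<^sup>2)*x^(2*0) + exp (-x\<^sup>2)*x^(2*k))"
proof -
    have b: "\<bar>x\<bar>^k \<le> 1 + x^(2*k)"
    proof (cases "\<bar>x\<bar> \<le> 1")
      case True then have "\<bar>x\<bar>^k \<le> 1" by (simp add: power_le_one)
      moreover have "0 \<le> x^(2*k)" by (simp add: power_mult)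
      ultimately show ?thesis by linarith
    next
      case False
      then have "\<bar>x\<bar>^k \<le> \<bar>x\<bar>^(2*k)" by (intro power_increasing) auto
      also have "\<dots> = x^(2*k)" by (simp add: power_mult)
      finally show ?thesis by simp
    qed
    have "norm (x^k * exp (-x\<^sup>2)) = \<bar>x\<bar>^k * exp (-x\<^sup>2)" by (simp add: abs_mult power_abs)
    also have "\<dots> \<le> (1 + x^(2*k)) * exp (-x\<^sup>2)" using b by (intro mult_right_mono) auto
    also have "\<dots> = norm (exp (-x\<^sup>2)*x^(2*0) + exp (-x\<^sup>2)*x^(2*k))"
      by (simp add: algebra_simps power_mult)
    finally show ?thesis .
qed

lemma int_mono: "integrable lborel (\<lambda>x::real. x^k * exp (-x\<^sup>2))"
  apply (rule Bochner_Integration.integrable_bound[where f="\<lambda>x::real. exp (-x\<^sup>2)*x^(2*0) + exp (-x\<^sup>2)*x^(2*k)"])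
  using int_even[of 0] int_even[of k] mono_bound by auto

lemma int_poly: "integrable lborel (\<lambda>x::real. poly p x * exp (-x\<^sup>2))"
proof -
  have e: "(\<lambda>x::real. poly p x * exp (-x\<^sup>2)) = (\<lambda>x. \<Sum>i\<le>degree p. coeff p i * (x^i * exp (-x\<^sup>2)))"
    by (auto simp: poly_altdef sum_distrib_right mult.assoc)
  show ?thesis unfolding e
    by (intro Bochner_Integration.integrable_sum integrable_mult_right int_mono)
qed

lemma wgt_eq: "wgt a x = indicator (- {-a<..<a}) x * exp (-x\<^sup>2)"
  by (simp add: wgt_def indicator_def)

lemma int_wgt: "integrable lborel (\<lambda>x. poly p x * wgt a x)"
proof -
  have e: "(\<lambda>x. poly p x * wgt a x) = (\<lambda>x. (poly p x * exp (-x\<^sup>2)) * indicator (- {-a<..<a}) x)"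
    by (auto simp: wgt_eq)
  show ?thesis unfolding e
    by (intro integrable_real_mult_indicator int_poly) auto
qed

definition J :: "real \<Rightarrow> real poly \<Rightarrow> real" where
  "J a p = (LINT x|lborel. poly p x * wgt a x)"

lemma wip_J: "wip a p q = J a (p * q)"
  by (simp add: wip_def J_def)

lemma J_add: "J a (p + q) = J a p + J a q"
  unfolding J_def by (simp add: distrib_right int_wgt)

lemma J_smult: "J a (smult c p) = c * J a p"
  unfolding J_def by (simp add: mult.assoc)

lemma J_diff: "J a (p - q) = J a p - J a q"
  unfolding J_def by (simp add: left_diff_distrib int_wgt)

lemma J_0: "J a 0 = 0"
  unfolding J_def by simp



lemma lim_mono: "((\<lambda>x::real. x^k * exp (-x\<^sup>2)) \<longlongrightarrow> 0) at_top"
proof (rule Lim_null_comparison)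
  have "((\<lambda>x::real. (x\<^sup>2)^k / exp (x\<^sup>2)) \<longlongrightarrow> 0) at_top"
    by (rule filterlim_compose[OF tendsto_power_div_exp_0]) (intro filterlim_pow_at_top filterlim_ident, auto)
  then show "((\<lambda>x::real. (x\<^sup>2)^k / exp (x\<^sup>2)) \<longlongrightarrow> 0) at_top" .
  show "\<forall>\<^sub>F x in at_top. norm (x^k * exp (-x\<^sup>2)) \<le> (x\<^sup>2)^k / exp (x\<^sup>2)"
  proof (rule eventually_mono[OF eventually_ge_at_top[of 1]])
    fix x :: real assume x: "1 \<le> x"
    have "x^k \<le> x^(2*k)" using x by (intro power_increasing) auto
    then have "x^k \<le> (x\<^sup>2)^k" by (simp add: power_mult)
    then show "norm (x^k * exp (-x\<^sup>2)) \<le> (x\<^sup>2)^k / exp (x\<^sup>2)"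
      using x by (simp add: exp_minus field_simps)
  qed
qed

lemma lim_poly: "((\<lambda>x::real. poly p x * exp (-x\<^sup>2)) \<longlongrightarrow> 0) at_top"
proof -
  have e: "(\<lambda>x::real. poly p x * exp (-x\<^sup>2)) = (\<lambda>x. \<Sum>i\<le>degree p. coeff p i * (x^i * exp (-x\<^sup>2)))"
    by (auto simp: poly_altdef sum_distrib_right mult.assoc)
  show ?thesis unfolding e
    by (intro tendsto_null_sum tendsto_mult_right_zero lim_mono)
qed

lemma reflect: 
  fixes f :: "real \<Rightarrow> real"
  assumes [measurable]: "f \<in> borel_measurable borel"
  shows "(LINT x|lborel. f x) = (LINT x|lborel. f (- x))"
proof -
  have "(LINT x|lborel. f x) = (LINT x|distr lborel borel uminus. f x)"
    by (simp add: lborel_distr_uminus)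
  also have "\<dots> = (LINT x|lborel. f (- x))"
    by (rule integral_distr) auto
  finally show ?thesis .
qed

lemma wgt_even: "wgt a (-x) = wgt a x"
  by (auto simp: wgt_def)

lemma J_odd: assumes "\<And>x. poly p (-x) = - poly p x" shows "J a p = 0"
proof -
  have m: "(\<lambda>x. poly p x * wgt a x) \<in> borel_measurable borel"
    using int_wgt[of p a] by (simp add: borel_measurable_integrable)
  have "J a p = (LINT x|lborel. poly p (-x) * wgt a (-x))"
    unfolding J_def by (rule reflect[OF m])
  also have "\<dots> = - J a p" by (simp add: assms wgt_even J_def)
  finally show ?thesis by simp
qed



lemma int_ind: "integrable lborel (\<lambda>x::real. indicator S x * (poly p x * exp (-x\<^sup>2)))" if "S \<in> sets borel"
  using integrable_real_mult_indicator[of S lborel "\<lambda>x::real. poly p x * exp (-x\<^sup>2)"] int_poly[of p] that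
  by (simp add: mult.commute)

lemma J_split:
  assumes "a > 0"
  shows "J a g = (LINT x|lborel. indicator {a<..} x * ((poly g x + poly g (-x)) * exp (-x\<^sup>2)))"
proof -
  define h where "h x = poly g x * exp (-x\<^sup>2)" for x
  have ae: "AE x in lborel. poly g x * wgt a x = indicator {a<..} x * h x + indicator {..<-a} x * h x"
    using AE_lborel_singleton[of a] AE_lborel_singleton[of "-a"]
    by eventually_elim (use assms in \<open>auto simp: wgt_def indicator_def h_def\<close>)
  have i1: "integrable lborel (\<lambda>x. indicator {a<..} x * h x)" unfolding h_def by (rule int_ind) auto
  have i2: "integrable lborel (\<lambda>x. indicator {..<-a} x * h x)" unfolding h_def by (rule int_ind) auto
  have i3: "integrable lborel (\<lambda>x. indicator {a<..} x * (poly g (-x) * exp (-x\<^sup>2)))"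
  proof -
    have "(\<lambda>x. poly g (-x)) = poly (pcompose g [:0,-1:])" by (auto simp: poly_pcompose)
    then show ?thesis using int_ind[of "{a<..}" "pcompose g [:0,-1:]"] by (auto simp: poly_pcompose)
  qed
  have "J a g = (LINT x|lborel. indicator {a<..} x * h x + indicator {..<-a} x * h x)"
    unfolding J_def
    by (rule integral_cong_AE) (use ae i1 i2 int_wgt[of g a] in \<open>auto simp: borel_measurable_integrable\<close>)
  also have "\<dots> = (LINT x|lborel. indicator {a<..} x * h x) + (LINT x|lborel. indicator {..<-a} x * h x)"
    using i1 i2 by simp
  also have "(LINT x|lborel. indicator {..<-a} x * h x) = (LINT x|lborel. indicator {..<-a} (-x) * h (-x))"
    by (rule reflect) (use i2 in \<open>simp add: borel_measurable_integrable\<close>)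
  also have "\<dots> = (LINT x|lborel. indicator {a<..} x * (poly g (-x) * exp (-x\<^sup>2)))"
    by (rule Bochner_Integration.integral_cong) (auto simp: h_def indicator_def)
  also have "(LINT x|lborel. indicator {a<..} x * h x) + \<dots> = (LINT x|lborel. indicator {a<..} x * h x + indicator {a<..} x * (poly g (-x) * exp (-x\<^sup>2)))"
    using i1 i3 by simp
  also have "\<dots> = (LINT x|lborel. indicator {a<..} x * ((poly g x + poly g (-x)) * exp (-x\<^sup>2)))"
    by (rule Bochner_Integration.integral_cong) (auto simp: h_def algebra_simps)
  finally show ?thesis .
qed

lemma FTC_poly:
  fixes p :: "real poly" and a :: real
  shows
  "(LINT x|lborel. indicator {a<..} x * ((poly (pderiv p) x - 2 * x * poly p x) * exp (-x\<^sup>2)))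
     = - poly p a * exp (-a\<^sup>2)"
proof -
  define f where "f x = (poly (pderiv p) x - 2 * x * poly p x) * exp (-x\<^sup>2)" for x
  define F where "F x = poly p x * exp (-x\<^sup>2)" for x
  have fp: "f x = poly (pderiv p - pCons 0 (smult 2 p)) x * exp (-x\<^sup>2)" for x
    by (simp add: f_def)
  have "(LBINT x=ereal a..\<infinity>. f x) = 0 - F a"
  proof (rule interval_integral_FTC_integrable)
    show "ereal a < \<infinity>" by simp
    show "(F has_vector_derivative f x) (at x)" for x
      unfolding F_def f_def has_real_derivative_iff_has_vector_derivative[symmetric]
      by (auto intro!: derivative_eq_intros simp: algebra_simps)
    show "isCont f x" for x unfolding f_def by (intro continuous_intros)
    show "set_integrable lborel (einterval (ereal a) \<infinity>) f"
      unfolding set_integrable_def fp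
      by (rule integrable_mult_indicator[OF _ int_poly]) auto
    show "((F \<circ> real_of_ereal) \<longlongrightarrow> F a) (at_right (ereal a))"
      unfolding ereal_tendsto_simps1 F_def
      by (intro tendsto_intros tendsto_mono[OF at_le[of _ UNIV]] continuous_intros) auto
    show "((F \<circ> real_of_ereal) \<longlongrightarrow> 0) (at_left \<infinity>)"
      unfolding ereal_tendsto_simps1 F_def using lim_poly .
  qed
  moreover have "(LBINT x=ereal a..\<infinity>. f x) = (LINT x|lborel. indicator {a<..} x * f x)"
    unfolding interval_lebesgue_integral_def einterval_def set_lebesgue_integral_def
    by (simp add: indicator_def)
  ultimately show ?thesis by (simp add: f_def F_def)
qed



lemma J_FTC:
  fixes p :: "real poly" and a :: real
  assumes "a > 0"
  shows "J a (pderiv p - pCons 0 (smult 2 p)) = (poly p (-a) - poly p a) * exp (-a\<^sup>2)"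
proof -
  define s where "s = p - pcompose p [:0,-1:]"
  have ps: "poly s x = poly p x - poly p (-x)" for x by (simp add: s_def poly_pcompose)
  have pds: "poly (pderiv s) x = poly (pderiv p) x + poly (pderiv p) (-x)" for x
    by (simp add: s_def pderiv_diff pderiv_pcompose poly_pcompose pderiv_pCons)
  have "J a (pderiv p - pCons 0 (smult 2 p)) =
     (LINT x|lborel. indicator {a<..} x * ((poly (pderiv s) x - 2 * x * poly s x) * exp (-x\<^sup>2)))"
    unfolding J_split[OF assms]
    by (rule Bochner_Integration.integral_cong) (auto simp: ps pds algebra_simps)
  also have "\<dots> = - poly s a * exp (-a\<^sup>2)" by (rule FTC_poly)
  finally show ?thesis by (simp add: ps algebra_simps)
qed

lemma J_pos:
  fixes p :: "real poly" and a :: real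
  assumes "a > 0" "p \<noteq> 0"
  shows "J a (p * p) > 0"
proof -
  define f where "f x = indicator {a<..} x * ((poly (p*p) x + poly (p*p) (-x)) * exp (-x\<^sup>2))" for x
  have J: "J a (p*p) = integral\<^sup>L lborel f" unfolding f_def J_split[OF assms(1)] ..
  have fnn: "0 \<le> f x" for x unfolding f_def by (auto simp: indicator_def)
  have fi: "integrable lborel f"
  proof -
    have "f = (\<lambda>x. indicator {a<..} x * (poly (p*p + pcompose (p*p) [:0,-1:]) x * exp (-x\<^sup>2)))"
      by (auto simp: f_def poly_pcompose)
    then show ?thesis using int_ind[of "{a<..}" "p*p + pcompose (p*p) [:0,-1:]"] by simp
  qed
  have "J a (p*p) \<noteq> 0"
  proof
    assume "J a (p*p) = 0"
    then have "AE x in lborel. f x = 0"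
      using integral_nonneg_eq_0_iff_AE[OF fi] fnn J by auto
    then obtain N where N: "{x \<in> space lborel. \<not> f x = 0} \<subseteq> N" "emeasure lborel N = 0" "N \<in> sets lborel"
      by (rule AE_E)
    define c where "c = Max (insert a {x. poly p x = 0}) + 1"
    have fin: "finite (insert a {x. poly p x = 0})" using poly_roots_finite[OF assms(2)] by simp
    have sub: "{c<..<c+1} \<subseteq> N"
    proof
      fix x assume x: "x \<in> {c<..<c+1}"
      have "a \<le> Max (insert a {x. poly p x = 0})" using fin by simp
      then have xa: "x > a" using x by (simp add: c_def)
      have "poly p x \<noteq> 0"
      proof
        assume "poly p x = 0"
        then have "x \<le> Max (insert a {x. poly p x = 0})" using fin by simp
        then show False using x by (simp add: c_def)
      qed
      then have "poly p x * poly p x > 0" by (metis not_real_square_gt_zero)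
      moreover have "poly p (-x) * poly p (-x) \<ge> 0" by simp
      ultimately have "(poly p x * poly p x + poly p (-x)*poly p (-x)) * exp(-x\<^sup>2) > 0"
        by (metis add_pos_nonneg exp_gt_zero mult_pos_pos)
      moreover have "f x = (poly p x * poly p x + poly p (-x)*poly p (-x)) * exp(-x\<^sup>2)"
        using xa by (simp add: f_def)
      ultimately have "f x \<noteq> 0" by (metis less_irrefl)
      then show "x \<in> N" using N(1) by auto
    qed
    have "emeasure lborel {c<..<c+1} \<le> emeasure lborel N"
      by (rule emeasure_mono[OF sub N(3)])
    then show False using N(2) by simp
  qed
  moreover have "J a (p*p) \<ge> 0" using J fnn by simp
  ultimately show ?thesis by simp
qed



fun Q :: "real \<Rightarrow> nat \<Rightarrow> real poly" where
  "Q a 0 = 1"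
| "Q a (Suc 0) = pCons 0 1"
| "Q a (Suc (Suc n)) = pCons 0 (Q a (Suc n)) -
     smult (J a (Q a (Suc n) * Q a (Suc n)) / J a (Q a n * Q a n)) (Q a n)"

definition H where "H a n = J a (Q a n * Q a n)"

lemma Q_SS: "Q a (Suc (Suc n)) = pCons 0 (Q a (Suc n)) - smult (H a (Suc n) / H a n) (Q a n)"
  by (simp add: H_def)

declare Q.simps(3)[simp del]

lemma Q_deg: "degree (Q a n) = n \<and> coeff (Q a n) n = 1"
proof (induction a n rule: Q.induct)
  case (3 a n)
  define c where "c = H a (Suc n) / H a n"
  have cf: "coeff (Q a (Suc (Suc n))) (Suc (Suc n)) = 1"
    using 3 by (simp add: Q_SS coeff_eq_0)
  have "degree (Q a (Suc (Suc n))) \<le> Suc (Suc n)"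
    unfolding Q_SS
    by (rule degree_diff_le) (use 3 degree_pCons_le[of 0 "Q a (Suc n)"] degree_smult_le[of _ "Q a n"] in auto)
  moreover have "Suc (Suc n) \<le> degree (Q a (Suc (Suc n)))" using cf by (intro le_degree) simp
  ultimately show ?case using cf by simp
qed auto

lemma Q_nz: "Q a n \<noteq> 0"
  using Q_deg[of a n] by auto

lemma Q_par: "poly (Q a n) (-x) = (-1)^n * poly (Q a n) x"
  by (induction a n rule: Q.induct) (auto simp: Q_SS algebra_simps)

lemma H_pos: "a > 0 \<Longrightarrow> H a n > 0"
  unfolding H_def by (rule J_pos) (auto simp: Q_nz)

lemma rem_deg:
  fixes r :: "real poly"
  assumes "degree r \<le> k" "coeff r k = 0"
  shows "r = 0 \<or> degree r < k"
  using assms leading_coeff_neq_0[of r] by (cases "r = 0") (auto simp: le_less)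

definition orth where "orth a k = (\<forall>q. degree q < k \<longrightarrow> J a (Q a k * q) = 0)"

lemma proj:
  assumes "orth a k" "degree q \<le> k"
  shows "J a (Q a k * q) = coeff q k * H a k"
proof -
  define r where "r = q - smult (coeff q k) (Q a k)"
  have rd: "degree r \<le> k" unfolding r_def
    by (rule degree_diff_le) (use assms(2) degree_smult_le[of _ "Q a k"] Q_deg[of a k] in auto)
  have rc: "coeff r k = 0" using Q_deg[of a k] by (simp add: r_def)
  have "J a (Q a k * r) = 0"
    using rem_deg[OF rd rc] assms(1) by (auto simp: orth_def J_0)
  moreover have "Q a k * q = smult (coeff q k) (Q a k * Q a k) + Q a k * r"
    by (simp add: r_def algebra_simps)
  ultimately show ?thesis by (simp add: J_add J_smult H_def)
qed

lemma J_comm: "J a (p * q) = J a (q * p)" by (simp add: mult.commute)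

lemma orth_all: "a > 0 \<Longrightarrow> orth a n"
proof (induction a n rule: Q.induct)
  case (1 a) then show ?case by (simp add: orth_def)
next
  case (2 a)
  show ?case unfolding orth_def
  proof (intro allI impI)
    fix q :: "real poly" assume "degree q < Suc 0"
    then have "degree q = 0" by simp
    then obtain c where qc: "q = [:c:]" by (metis degree_eq_zeroE)
    show "J a (Q a (Suc 0) * q) = 0"
      by (rule J_odd) (simp add: qc)
  qed
next
  case (3 a n)
  define m where "m = Suc n"
  have om: "orth a m" and on: "orth a n" using 3 by (auto simp: m_def)
  have Hn: "H a n \<noteq> 0" using H_pos[OF "3.prems"] by (metis less_irrefl)
  show ?case unfolding orth_def
  proof (intro allI impI)
    fix q :: "real poly" assume qd: "degree q < Suc (Suc n)"
    define c where "c = coeff q m"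
    define r where "r = q - smult c (Q a m)"
    have rd0: "degree r \<le> m" unfolding r_def
      by (rule degree_diff_le) (use qd degree_smult_le[of _ "Q a m"] Q_deg[of a m] in \<open>auto simp: m_def\<close>)
    have rc: "coeff r m = 0" using Q_deg[of a m] by (simp add: r_def c_def)
    have rd: "degree r \<le> n" using rem_deg[OF rd0 rc] by (auto simp: m_def)
    have qe: "q = smult c (Q a m) + r" by (simp add: r_def)
    have odd0: "J a (Q a m * pCons 0 (Q a m)) = 0"
      by (rule J_odd) (simp add: Q_par algebra_simps)
    have e1: "J a (Q a m * pCons 0 r) = coeff r n * H a m"
    proof -
      have "degree (pCons 0 r) \<le> m" using rd by (auto simp: m_def)
      from proj[OF om this] show ?thesis by (simp add: m_def)
    qed
    have e2: "J a (Q a n * r) = coeff r n * H a n" by (rule proj[OF on rd])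
    have e3: "J a (Q a n * Q a m) = 0"
      using om Q_deg[of a n] J_comm[of a "Q a n"] by (auto simp: orth_def m_def)
    have peq: "Q a (Suc (Suc n)) * q =
       smult c (Q a m * pCons 0 (Q a m)) + Q a m * pCons 0 r
       - smult (H a m / H a n) (smult c (Q a n * Q a m) + Q a n * r)"
      by (simp add: Q_SS qe m_def algebra_simps)
    have "J a (Q a (Suc (Suc n)) * q) =
       c * J a (Q a m * pCons 0 (Q a m)) + J a (Q a m * pCons 0 r)
       - (H a m / H a n) * (c * J a (Q a n * Q a m) + J a (Q a n * r))"
      by (simp only: peq J_add J_diff J_smult)
    also have "\<dots> = 0" unfolding odd0 e1 e2 e3 using Hn by (simp add: field_simps)
    finally show "J a (Q a (Suc (Suc n)) * q) = 0" .
  qed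
qed



lemma OP_eq: assumes "a > 0" shows "OP a n = Q a n"
  unfolding OP_def
proof (rule the_equality)
  show "degree (Q a n) = n \<and> lead_coeff (Q a n) = 1 \<and> (\<forall>q. degree q < n \<longrightarrow> wip a (Q a n) q = 0)"
    using Q_deg[of a n] orth_all[OF assms, of n] by (auto simp: orth_def wip_J)
next
  fix p assume p: "degree p = n \<and> lead_coeff p = 1 \<and> (\<forall>q. degree q < n \<longrightarrow> wip a p q = 0)"
  define d where "d = p - Q a n"
  have dd: "degree d \<le> n" unfolding d_def
    by (rule degree_diff_le) (use p Q_deg[of a n] in auto)
  have dc: "coeff d n = 0" using p Q_deg[of a n] by (auto simp: d_def)
  have "d = 0"
  proof (rule ccontr)
    assume dn: "d \<noteq> 0"
    then have dl: "degree d < n" using rem_deg[OF dd dc] by auto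
    have "J a (d * d) = J a (p * d) - J a (Q a n * d)"
      by (simp add: d_def left_diff_distrib J_diff)
    also have "\<dots> = 0" using p dl orth_all[OF assms, of n] by (simp add: orth_def wip_J)
    finally show False using J_pos[OF assms dn] by simp
  qed
  then show "p = Q a n" by (simp add: d_def)
qed

lemma hn_eq: "a > 0 \<Longrightarrow> hn a n = H a n"
  by (simp add: hn_def OP_eq wip_J H_def)

lemma IBP:
  assumes "a > 0"
  shows "2 * H a (Suc k) = real (Suc k) * H a k + 2 * exp (-a\<^sup>2) * poly (Q a (Suc k)) a * poly (Q a k) a"
proof -
  define p where "p = Q a (Suc k) * Q a k"
  have pm: "poly p (-a) = - poly p a" by (simp add: p_def Q_par)
  have f: "J a (pderiv p - pCons 0 (smult 2 p)) = - 2 * poly p a * exp (-a\<^sup>2)"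
    using J_FTC[OF assms, of p] pm by simp
  have j1: "J a (Q a (Suc k) * pderiv (Q a k)) = 0"
    using orth_all[OF assms, of "Suc k"] Q_deg[of a k] by (auto simp: orth_def degree_pderiv)
  have j2: "J a (Q a k * pderiv (Q a (Suc k))) = real (Suc k) * H a k"
  proof -
    have "degree (pderiv (Q a (Suc k))) \<le> k" using Q_deg[of a "Suc k"] by (simp add: degree_pderiv)
    from proj[OF orth_all[OF assms] this] show ?thesis
      using Q_deg[of a "Suc k"] by (simp add: coeff_pderiv)
  qed
  have j3: "J a (Q a (Suc k) * pCons 0 (Q a k)) = H a (Suc k)"
  proof -
    have "degree (pCons 0 (Q a k)) \<le> Suc k" using Q_deg[of a k] by simp
    from proj[OF orth_all[OF assms] this] show ?thesis using Q_deg[of a k] by simp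
  qed
  have peq: "pderiv p - pCons 0 (smult 2 p) =
     Q a (Suc k) * pderiv (Q a k) + Q a k * pderiv (Q a (Suc k)) - smult 2 (Q a (Suc k) * pCons 0 (Q a k))"
    by (simp add: p_def pderiv_mult)
  have "J a (pderiv p - pCons 0 (smult 2 p)) = real (Suc k) * H a k - 2 * H a (Suc k)"
    unfolding peq J_diff J_add J_smult j1 j2 j3 by simp
  with f have E: "- 2 * poly p a * exp (-a\<^sup>2) = real (Suc k) * H a k - 2 * H a (Suc k)" by simp
  show ?thesis using E unfolding p_def poly_mult by algebra
qed

lemma rn_eq: "a > 0 \<Longrightarrow> rn a (Suc k) = 2 * exp (-a\<^sup>2) * poly (Q a (Suc k)) a * poly (Q a k) a / H a k"
  by (simp add: rn_def OP_eq hn_eq)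

lemma alg:
  fixes a N R S T :: real
  assumes a: "a \<noteq> 0" and nz: "N + R \<noteq> 0" and h: "a^2 * R^2 = (N + R) / 2 * (S + R) * (R + T)"
  shows "(- 2 * S / a^2 + - 2 * R / a^2) * (- 2 * R / a^2 + - 2 * T / a^2)
          = - 4 * (- 2 * R / a^2)^2 / (- 2 * R / a^2 - 2 * N / a^2)"
proof -
  have st: "(S + R) * (R + T) = 2 * a^2 * R^2 / (N + R)" using h nz by (simp add: field_simps)
  have "(- 2 * S / a^2 + - 2 * R / a^2) * (- 2 * R / a^2 + - 2 * T / a^2) = 4 * ((S + R) * (R + T)) / a^4"
    using a by (simp add: field_simps power2_eq_square power4_eq_xxxx)
  also have "\<dots> = 8 * R^2 / (a^2 * (N + R))" unfolding st using a nz
    by (auto simp: divide_simps power2_eq_square power4_eq_xxxx)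
  also have "\<dots> = - 4 * (- 2 * R / a^2)^2 / (- 2 * R / a^2 - 2 * N / a^2)"
  proof -
    have d: "- 2 * R / a^2 - 2 * N / a^2 = -2 * (N + R) / a^2" using a by (simp add: field_simps)
    show ?thesis unfolding d using a nz by (auto simp: divide_simps power2_eq_square algebra_simps)
  qed
  finally show ?thesis .
qed

theorem mainTheorem3:
  fixes a :: real and n :: nat
  assumes "a > 0" and "n \<ge> 1"
  shows "a^2 * (rn a n)^2 =
           (real n + rn a n) / 2 * (rn a (n+1) + rn a n) * (rn a n + rn a (n-1))
         \<and> (let y = (\<lambda>k. - 2 * rn a k / a^2) in
              (y (n+1) + y n) * (y n + y (n-1)) = - 4 * (y n)^2 / (y n - 2 * real n / a^2))"
proof -
  obtain k where nk: "n = Suc k" using assms(2) by (cases n) auto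
  define e where "e = exp (-a\<^sup>2)"
  define P where "P j = poly (Q a j) a" for j
  define h where "h j = H a j" for j
  have hp: "h j > 0" for j using H_pos[OF assms(1)] by (simp add: h_def)
  have R1: "rn a (Suc k) = 2 * e * P (Suc k) * P k / h k" by (simp add: rn_eq[OF assms(1)] e_def P_def h_def)
  have R2: "rn a (Suc (Suc k)) = 2 * e * P (Suc (Suc k)) * P (Suc k) / h (Suc k)"
    by (simp add: rn_eq[OF assms(1)] e_def P_def h_def)
  have PSS: "P (Suc (Suc k)) = a * P (Suc k) - h (Suc k) / h k * P k"
    by (simp add: P_def h_def Q_SS)
  have S1: "rn a (Suc (Suc k)) + rn a (Suc k) = 2 * e * a * P (Suc k)^2 / h (Suc k)"
    unfolding R1 R2 PSS using hp[of k] hp[of "Suc k"] by (simp add: field_simps power2_eq_square)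
  have S2: "rn a (Suc k) + rn a k = 2 * e * a * P k ^2 / h k"
  proof (cases k)
    case 0 have "rn a 0 = 0" by (simp add: rn_def)
    then show ?thesis using R1 by (simp add: 0 P_def)
  next
    case (Suc j)
    have R0: "rn a (Suc j) = 2 * e * P (Suc j) * P j / h j" by (simp add: rn_eq[OF assms(1)] e_def P_def h_def)
    have PS: "P (Suc (Suc j)) = a * P (Suc j) - h (Suc j) / h j * P j"
      by (simp add: P_def h_def Q_SS)
    show ?thesis unfolding R1 unfolding Suc R0 PS using hp[of j] hp[of "Suc j"] by (simp add: field_simps power2_eq_square)
  qed
  have B: "real (Suc k) + rn a (Suc k) = 2 * h (Suc k) / h k"
    using IBP[OF assms(1), of k] hp[of k] unfolding R1 by (simp add: field_simps e_def P_def h_def)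
  have first: "a^2 * (rn a n)^2 =
           (real n + rn a n) / 2 * (rn a (n+1) + rn a n) * (rn a n + rn a (n-1))"
    unfolding nk using S1 S2 B hp[of k] hp[of "Suc k"]
    by (simp add: R1 field_simps power2_eq_square)
  have nz: "real n + rn a n \<noteq> 0" using B hp[of k] hp[of "Suc k"] nk by simp
  have a0: "a \<noteq> 0" using assms(1) by simp
  have second: "(let y = (\<lambda>k. - 2 * rn a k / a^2) in
              (y (n+1) + y n) * (y n + y (n-1)) = - 4 * (y n)^2 / (y n - 2 * real n / a^2))"
    unfolding Let_def using alg[OF a0 nz first] by simp
  show ?thesis using first second by simp
qed


end
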